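(* Let $t_1\ge 0$, let $t_2=0$ or $t_2\ge 2$, and let $t_3\ge 0$ be integers. Then $\rho(F_1(t_1,t_2,t_3))<\rho(F_0(t_1+1,t_2+1,t_3))$. (Both graphs have the same number of edges, namely $3t_1+2t_2+2t_3+7$ if $t_3\ge1$ and $3t_1+2t_2+5$ if $t_3=0$.)
   Context: $\rho(G)$ denotes the largest eigenvalue of the adjacency matrix of $G$. For integers $t_1,t_2,t_3\ge 0$, the graph $F_0(t_1,t_2,t_3)$ is defined as follows. It has a central vertex $u^*$. (a) For each $i=1,\dots,t_1$ there are two vertices $a_i,b_i$ forming a triangle $u^*a_ib_i$. (b) If $t_2\ge 1$, there are vertices $v,u_1,\dots,u_{t_2}$ with each $u_j$ adjacent to both $u^*$ and $v$ (so these form a $K_{2,t_2}$ in which $u^*$ is a vertex of the 2-element side). (c) If $t_3\ge 1$, there are vertices $v_1',v_2'$, both adjacent to $u^*$, and vertices $v_1,\dots,v_{t_3}$, each adjacent to both $v_1'$ and $v_2'$ (so these form a $K_{2,t_3+1}$ attached at the vertex $u^*$ of its $(t_3+1)$-element side). There are no other vertices or edges; the three parts share only $u^*$. Thus $F_0(t_1,t_2,t_3)$ has $3t_1+2t_2$ edges if $t_3=0$ and $3t_1+2t_2+2t_3+2$ edges if $t_3\ge1$. The graph $F_1(t_1,t_2,t_3)$ is obtained from $F_0(t_1,t_2,t_3)$ by adding four new vertices $w_1,w_2,w_3,w_4$ and the edges $u^*w_3,w_3w_1,w_1w_2,w_2w_4,w_4u^*$, i.e. attaching a 5-cycle at $u^*$.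 *)

theory Defs
  imports Complex_Main
begin

text \<open>Finite simple graphs given by a finite vertex set and a set of edges, each edge
  recorded as an ordered pair (the graph is undirected: adjacency is the symmetric closure).\<close>

type_synonym 'a graph = "'a set \<times> ('a \<times> 'a) set"

definition verts :: "'a graph \<Rightarrow> 'a set" where "verts G = fst G"
definition edges :: "'a graph \<Rightarrow> ('a \<times> 'a) set" where "edges G = snd G"

definition adj :: "'a graph \<Rightarrow> 'a \<Rightarrow> 'a \<Rightarrow> real" where
  "adj G x y = (if (x, y) \<in> edges G \<or> (y, x) \<in> edges G then 1 else 0)"

definition adj_eigenvalue :: "'a graph \<Rightarrow> real \<Rightarrow> bool" where
  "adj_eigenvalue G mu \<longleftrightarrow>
     (\<exists>x :: 'a \<Rightarrow> real. (\<exists>v\<in>verts G. x v \<noteq> 0) \<and>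
        (\<forall>v\<in>verts G. (\<Sum>w\<in>verts G. adj G v w * x w) = mu * x v))"

definition rho :: "'a graph \<Rightarrow> real" where
  "rho G = Max {mu. adj_eigenvalue G mu}"

datatype vtx = Ustar | Av nat | Bv nat | Vv | Uv nat | V1' | V2' | Vk nat | Wv nat

definition F0 :: "nat \<Rightarrow> nat \<Rightarrow> nat \<Rightarrow> vtx graph" where
  "F0 t1 t2 t3 =
    ({Ustar} \<union> Av ` {1..t1} \<union> Bv ` {1..t1}
       \<union> (if t2 \<ge> 1 then {Vv} \<union> Uv ` {1..t2} else {})
       \<union> (if t3 \<ge> 1 then {V1', V2'} \<union> Vk ` {1..t3} else {}),
     (\<Union>i\<in>{1..t1}. {(Ustar, Av i), (Ustar, Bv i), (Av i, Bv i)})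
       \<union> (if t2 \<ge> 1 then (\<Union>j\<in>{1..t2}. {(Ustar, Uv j), (Vv, Uv j)}) else {})
       \<union> (if t3 \<ge> 1 then {(Ustar, V1'), (Ustar, V2')}
            \<union> (\<Union>k\<in>{1..t3}. {(V1', Vk k), (V2', Vk k)}) else {}))"

definition F1 :: "nat \<Rightarrow> nat \<Rightarrow> nat \<Rightarrow> vtx graph" where
  "F1 t1 t2 t3 =
    (verts (F0 t1 t2 t3) \<union> {Wv 1, Wv 2, Wv 3, Wv 4},
     edges (F0 t1 t2 t3) \<union>
       {(Ustar, Wv 3), (Wv 3, Wv 1), (Wv 1, Wv 2), (Wv 2, Wv 4), (Wv 4, Ustar)})"

end

theory Submission
  imports Defs "HOL-Library.Function_Algebras"
begin


lemma sum_fun_apply: "(\<Sum>x\<in>B. (g x :: 'a \<Rightarrow> real)) v = (\<Sum>x\<in>B. g x v)"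
  by (induction B rule: infinite_finite_induct) (auto simp: plus_fun_def zero_fun_def)

interpretation fvs: vector_space "\<lambda>(c::real) (f::'a \<Rightarrow> real). \<lambda>x. c * f x"
  by unfold_locales (auto simp: fun_eq_iff algebra_simps plus_fun_def)

lemma adj_sym: "adj G v w = adj G w v"
  unfolding adj_def by auto

lemma adj_nonneg: "adj G v w \<ge> 0"
  unfolding adj_def by auto

lemma eig_orth:
  assumes fin: "finite V" and V: "V = verts G"
    and ex: "\<forall>v\<in>V. (\<Sum>w\<in>V. adj G v w * x w) = mu * x v"
    and ez: "\<forall>v\<in>V. (\<Sum>w\<in>V. adj G v w * z w) = nu * z v"
    and ne: "mu \<noteq> nu"
  shows "(\<Sum>v\<in>V. x v * z v) = 0"
proof -
  have "mu * (\<Sum>v\<in>V. x v * z v) = (\<Sum>v\<in>V. (mu * x v) * z v)"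
    by (simp add: sum_distrib_left mult.assoc)
  also have "\<dots> = (\<Sum>v\<in>V. (\<Sum>w\<in>V. adj G v w * x w) * z v)"
    using ex by simp
  also have "\<dots> = (\<Sum>v\<in>V. \<Sum>w\<in>V. adj G v w * x w * z v)"
    by (simp add: sum_distrib_right)
  also have "\<dots> = (\<Sum>w\<in>V. \<Sum>v\<in>V. adj G v w * x w * z v)"
    by (rule sum.swap)
  also have "\<dots> = (\<Sum>w\<in>V. x w * (\<Sum>v\<in>V. adj G w v * z v))"
    by (simp add: sum_distrib_left adj_sym mult.commute mult.left_commute)
  also have "\<dots> = (\<Sum>w\<in>V. x w * (nu * z w))"
    using ez by simp
  also have "\<dots> = nu * (\<Sum>v\<in>V. x v * z v)"
    by (simp add: sum_distrib_left mult.commute mult.left_commute)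
  finally have "(mu - nu) * (\<Sum>v\<in>V. x v * z v) = 0" by (simp add: algebra_simps)
  with ne show ?thesis by simp
qed

lemma fin_eig:
  assumes fin: "finite (verts G)"
  shows "finite {mu. adj_eigenvalue G mu}"
proof (rule ccontr)
  define V where "V = verts G"
  define S where "S = {mu. adj_eigenvalue G mu}"
  assume "\<not> finite {mu. adj_eigenvalue G mu}"
  hence inf: "infinite S" by (simp add: S_def)
  obtain S' where S': "S' \<subseteq> S" "finite S'" "card S' = card V + 1"
    using infinite_arbitrarily_large[OF inf] by blast
  have "\<forall>mu\<in>S. \<exists>x. (\<exists>v\<in>V. x v \<noteq> 0) \<and> (\<forall>v\<in>V. (\<Sum>w\<in>V. adj G v w * x w) = mu * x v)"
    by (auto simp: S_def V_def adj_eigenvalue_def)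
  then obtain ev where ev: "\<And>mu. mu \<in> S \<Longrightarrow> (\<exists>v\<in>V. ev mu v \<noteq> 0) \<and> (\<forall>v\<in>V. (\<Sum>w\<in>V. adj G v w * ev mu w) = mu * ev mu v)"
    by metis
  define e where "e mu = (\<lambda>v. if v \<in> V then ev mu v else (0::real))" for mu
  have finV: "finite V" using fin V_def by simp
  have e_eq: "\<forall>v\<in>V. (\<Sum>w\<in>V. adj G v w * e mu w) = mu * e mu v" if "mu \<in> S" for mu
  proof
    fix v assume v: "v \<in> V"
    have "(\<Sum>w\<in>V. adj G v w * e mu w) = (\<Sum>w\<in>V. adj G v w * ev mu w)"
      by (rule sum.cong) (auto simp: e_def)
    also have "\<dots> = mu * ev mu v" using ev[OF that] v by blast
    finally show "(\<Sum>w\<in>V. adj G v w * e mu w) = mu * e mu v" using v by (simp add: e_def)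
  qed
  have e_out: "e mu v = 0" if "v \<notin> V" for mu v using that by (simp add: e_def)
  have e_pos: "(\<Sum>v\<in>V. e mu v * e mu v) > 0" if muS: "mu \<in> S" for mu
  proof -
    obtain v where v: "v \<in> V" "ev mu v \<noteq> 0" using ev[OF muS] by blast
    have "(\<Sum>v\<in>V. e mu v * e mu v) \<ge> e mu v * e mu v"
      using v finV by (intro member_le_sum) auto
    moreover have "e mu v \<noteq> 0" using v by (simp add: e_def)
    hence "e mu v * e mu v > 0" by (metis not_real_square_gt_zero)
    ultimately show ?thesis by linarith
  qed
  have e_orth: "(\<Sum>v\<in>V. e mu v * e nu v) = 0" if "mu \<in> S" "nu \<in> S" "mu \<noteq> nu" for mu nu
    by (rule eig_orth[OF finV V_def e_eq[OF that(1)] e_eq[OF that(2)] that(3)])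
  have inj: "inj_on e S'"
  proof
    fix mu nu assume a: "mu \<in> S'" "nu \<in> S'" "e mu = e nu"
    show "mu = nu"
    proof (rule ccontr)
      assume ne: "mu \<noteq> nu"
      have mS: "mu \<in> S" "nu \<in> S" using a(1,2) S'(1) by auto
      have "(\<Sum>v\<in>V. e mu v * e nu v) = 0" using e_orth[OF mS ne] .
      moreover have "(\<Sum>v\<in>V. e mu v * e nu v) > 0" using e_pos[OF mS(1)] a(3) by simp
      ultimately show False by simp
    qed
  qed
  define B where "B = e ` S'"
  have cardB: "card B = card V + 1" using inj S' by (simp add: B_def card_image)
  have finB: "finite B" using S' by (simp add: B_def)
  have indep: "fvs.independent B"
  proof (rule fvs.independent_if_scalars_zero[OF finB])
    fix f b assume sum0: "(\<Sum>x\<in>B. (\<lambda>v. f x * x v)) = 0" and b: "b \<in> B"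
    obtain mu where mu: "mu \<in> S'" "b = e mu" using b B_def by auto
    have pt: "(\<Sum>x\<in>B. f x * x v) = 0" for v
      using fun_cong[OF sum0, of v] by (simp add: sum_fun_apply)
    have "0 = (\<Sum>v\<in>V. b v * (\<Sum>x\<in>B. f x * x v))" using pt by simp
    also have "\<dots> = (\<Sum>v\<in>V. \<Sum>x\<in>B. f x * (x v * b v))"
      by (simp add: sum_distrib_left mult.commute mult.left_commute)
    also have "\<dots> = (\<Sum>x\<in>B. \<Sum>v\<in>V. f x * (x v * b v))"
      by (rule sum.swap)
    also have "\<dots> = (\<Sum>x\<in>B. f x * (\<Sum>v\<in>V. x v * b v))"
      by (simp add: sum_distrib_left)
    also have "\<dots> = (\<Sum>x\<in>{b}. f x * (\<Sum>v\<in>V. x v * b v))"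
    proof (rule sum.mono_neutral_right[OF finB])
      show "{b} \<subseteq> B" using b by simp
      show "\<forall>x\<in>B - {b}. f x * (\<Sum>v\<in>V. x v * b v) = 0"
      proof
        fix x assume x: "x \<in> B - {b}"
        then obtain nu where nu: "nu \<in> S'" "x = e nu" using B_def by auto
        have "nu \<noteq> mu" using x nu mu by auto
        thus "f x * (\<Sum>v\<in>V. x v * b v) = 0" using e_orth[of nu mu] nu mu S' by auto
      qed
    qed
    also have "\<dots> = f b * (\<Sum>v\<in>V. b v * b v)" by simp
    finally have "f b * (\<Sum>v\<in>V. b v * b v) = 0" by simp
    moreover have "(\<Sum>v\<in>V. b v * b v) > 0" using e_pos[of mu] mu S' by auto
    ultimately show "f b = 0" by simp
  qed
  define T where "T = (\<lambda>u. \<lambda>v. if v = u then (1::real) else 0) ` V"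
  have sp: "B \<subseteq> fvs.span T"
  proof
    fix b assume b: "b \<in> B"
    obtain mu where mu: "b = e mu" using b B_def by auto
    have "b = (\<Sum>u\<in>V. (\<lambda>v. b u * (if v = u then 1 else 0)))"
    proof
      fix v
      show "b v = (\<Sum>u\<in>V. (\<lambda>v. b u * (if v = u then 1 else 0))) v"
      proof -
        have "(\<Sum>u\<in>V. (\<lambda>v. b u * (if v = u then 1 else 0))) v = (\<Sum>u\<in>V. if v = u then b u else 0)"
          by (simp add: sum_fun_apply) (rule sum.cong, auto)
        also have "\<dots> = b v" using finV by (cases "v \<in> V") (auto simp: mu e_out)
        finally show ?thesis by simp
      qed
    qed
    also have "\<dots> \<in> fvs.span T"
      by (intro fvs.span_sum fvs.span_scale fvs.span_base) (auto simp: T_def)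
    finally show "b \<in> fvs.span T" .
  qed
  have "card B \<le> card T" using fvs.independent_span_bound[OF _ indep sp] finV T_def by simp
  also have "\<dots> \<le> card V" unfolding T_def by (rule card_image_le[OF finV])
  finally show False using cardB by simp
qed

lemma eig_le:
  assumes fin: "finite (verts G)" and pos: "\<forall>v\<in>verts G. y v > 0"
    and sup: "\<forall>v\<in>verts G. (\<Sum>w\<in>verts G. adj G v w * y w) \<le> l * y v"
    and ev: "adj_eigenvalue G mu"
  shows "mu \<le> l"
proof -
  define V where "V = verts G"
  obtain x where xnz: "\<exists>v\<in>V. x v \<noteq> 0" and xe: "\<forall>v\<in>V. (\<Sum>w\<in>V. adj G v w * x w) = mu * x v"
    using ev by (auto simp: adj_eigenvalue_def V_def)
  define r where "r v = \<bar>x v\<bar> / y v" for v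
  have finV: "finite V" using fin V_def by simp
  have ne: "V \<noteq> {}" using xnz by auto
  define m where "m = Max (r ` V)"
  have "m \<in> r ` V" unfolding m_def using finV ne by (intro Max_in) auto
  then obtain v0 where v0: "v0 \<in> V" "r v0 = m" by auto
  have rle: "r v \<le> m" if "v \<in> V" for v unfolding m_def using finV that by (intro Max_ge) auto
  obtain v1 where v1: "v1 \<in> V" "x v1 \<noteq> 0" using xnz by auto
  have "r v1 > 0" using v1 pos V_def by (simp add: r_def)
  hence mpos: "m > 0" using rle[OF v1(1)] by simp
  have bnd: "\<bar>x w\<bar> \<le> m * y w" if "w \<in> V" for w
  proof -
    have "y w > 0" using pos that V_def by simp
    hence "\<bar>x w\<bar> = r w * y w" by (simp add: r_def)
    also have "\<dots> \<le> m * y w" using rle[OF that] pos that V_def by (intro mult_right_mono) auto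
    finally show ?thesis .
  qed
  have "y v0 > 0" using pos v0 V_def by simp
  hence x0: "\<bar>x v0\<bar> = m * y v0" using v0 by (auto simp: r_def field_simps)
  have "\<bar>mu\<bar> * \<bar>x v0\<bar> = \<bar>\<Sum>w\<in>V. adj G v0 w * x w\<bar>" using xe v0 by (simp add: abs_mult)
  also have "\<dots> \<le> (\<Sum>w\<in>V. \<bar>adj G v0 w * x w\<bar>)" by (rule sum_abs)
  also have "\<dots> \<le> (\<Sum>w\<in>V. adj G v0 w * (m * y w))"
    by (intro sum_mono) (auto simp: abs_mult adj_nonneg bnd mult_left_mono)
  also have "\<dots> = m * (\<Sum>w\<in>V. adj G v0 w * y w)"
    by (simp add: sum_distrib_left mult.commute mult.left_commute)
  also have "\<dots> \<le> m * (l * y v0)" using sup v0 mpos V_def by (intro mult_left_mono) auto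
  also have "\<dots> = l * \<bar>x v0\<bar>" using x0 by simp
  finally have "\<bar>mu\<bar> * \<bar>x v0\<bar> \<le> l * \<bar>x v0\<bar>" .
  moreover have "\<bar>x v0\<bar> > 0" using x0 mpos pos v0 V_def by simp
  ultimately have "\<bar>mu\<bar> \<le> l" by simp
  thus ?thesis by simp
qed



definition nb :: "'a graph \<Rightarrow> 'a \<Rightarrow> 'a set" where
 "nb G v = {w\<in>verts G. (v,w)\<in>edges G \<or> (w,v)\<in>edges G}"

lemma sum_adj: "finite (verts G) \<Longrightarrow> (\<Sum>w\<in>verts G. adj G v w * x w) = (\<Sum>w\<in>nb G v. x w)"
  unfolding nb_def adj_def
  by (simp add: sum.inter_filter) (rule sum.cong, auto)

lemma finF0: "finite (verts (F0 t1 t2 t3))"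
  by (simp add: F0_def verts_def)
lemma finF1: "finite (verts (F1 t1 t2 t3))"
  by (simp add: F1_def F0_def verts_def)

definition yv :: "nat \<Rightarrow> nat \<Rightarrow> real \<Rightarrow> vtx \<Rightarrow> real" where
 "yv t2 t3 l v = (case v of Ustar \<Rightarrow> 1 | Av i \<Rightarrow> 1/(l-1) | Bv i \<Rightarrow> 1/(l-1)
    | Vv \<Rightarrow> real t2/(l^2 - real t2) | Uv j \<Rightarrow> l/(l^2 - real t2)
    | V1' \<Rightarrow> l/(l^2 - 2*real t3) | V2' \<Rightarrow> l/(l^2 - 2*real t3) | Vk k \<Rightarrow> 2/(l^2-2*real t3)
    | Wv n \<Rightarrow> (if n = 1 \<or> n = 2 then 1/(l^2-l-1) else (l-1)/(l^2-l-1)))"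

lemma sum_img_const:
  assumes "inj f" "\<And>a. a \<in> {1..n} \<Longrightarrow> g (f a) = (c::real)"
  shows "(\<Sum>w\<in>f`{1..n}. g w) = real n * c"
proof -
  let ?A = "{1..n::nat}"
  have "(\<Sum>w\<in>f`?A. g w) = (\<Sum>a\<in>?A. g (f a))"
    using assms(1) by (simp add: sum.reindex inj_on_def)
  also have "\<dots> = (\<Sum>a\<in>?A. c)" using assms(2) by simp
  finally show ?thesis by simp
qed

lemma inj_Av: "inj Av" and inj_Bv: "inj Bv" and inj_Uv: "inj Uv" and inj_Vk: "inj Vk"
  by (auto simp: inj_def)

definition s0 :: "nat \<Rightarrow> nat \<Rightarrow> nat \<Rightarrow> real \<Rightarrow> real" where
  "s0 t1 t2 t3 l = 2*real t1/(l-1) + real t2 * l/(l^2-real t2)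
     + (if t3\<ge>1 then 1 else 0) * (2*l/(l^2-2*real t3))"

lemma nbF0_U: "nb (F0 t1 t2 t3) Ustar = Av`{1..t1} \<union> Bv`{1..t1} \<union> (if t2\<ge>1 then Uv`{1..t2} else {}) \<union> (if t3 \<ge> 1 then {V1',V2'} else {})"
  by (auto simp: nb_def F0_def verts_def edges_def split: if_splits)
lemma nbF1_U: "nb (F1 t1 t2 t3) Ustar = (Av`{1..t1} \<union> Bv`{1..t1} \<union> (if t2\<ge>1 then Uv`{1..t2} else {}) \<union> (if t3 \<ge> 1 then {V1',V2'} else {})) \<union> {Wv 3, Wv 4}"
  by (auto simp: nb_def F1_def F0_def verts_def edges_def split: if_splits)

lemma verts_F1: "verts (F1 t1 t2 t3) = verts (F0 t1 t2 t3) \<union> {Wv 1, Wv 2, Wv 3, Wv 4}"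
  by (simp add: F1_def verts_def)
lemma edges_F1: "edges (F1 t1 t2 t3) = edges (F0 t1 t2 t3) \<union>
       {(Ustar, Wv 3), (Wv 3, Wv 1), (Wv 1, Wv 2), (Wv 2, Wv 4), (Wv 4, Ustar)}"
  by (simp add: F1_def edges_def)
lemma E0_noW: "(a,b) \<in> edges (F0 t1 t2 t3) \<Longrightarrow> a \<noteq> Wv n \<and> b \<noteq> Wv n"
  by (auto simp: F0_def edges_def split: if_splits)
lemma V0_noW: "Wv n \<notin> verts (F0 t1 t2 t3)"
  by (auto simp: F0_def verts_def split: if_splits)
lemma nbF1_F0: assumes "v \<noteq> Ustar" "\<And>n. v \<noteq> Wv n" shows "nb (F1 t1 t2 t3) v = nb (F0 t1 t2 t3) v"
proof -
  have C: "(v,w) \<notin> {(Ustar, Wv 3), (Wv 3, Wv 1), (Wv 1, Wv 2), (Wv 2, Wv 4), (Wv 4, Ustar)} \<and>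
      (w,v) \<notin> {(Ustar, Wv 3), (Wv 3, Wv 1), (Wv 1, Wv 2), (Wv 2, Wv 4), (Wv 4, Ustar)}" for w
    using assms by auto
  have W: "w \<notin> {Wv 1, Wv 2, Wv 3, Wv 4}" if "(v,w) \<in> edges (F0 t1 t2 t3) \<or> (w,v) \<in> edges (F0 t1 t2 t3)" for w
    using that E0_noW by blast
  show ?thesis unfolding nb_def verts_F1 edges_F1
  proof (intro set_eqI iffI)
    fix w assume "w \<in> {w \<in> verts (F0 t1 t2 t3) \<union> {Wv 1, Wv 2, Wv 3, Wv 4}.
        (v, w) \<in> edges (F0 t1 t2 t3) \<union> {(Ustar, Wv 3), (Wv 3, Wv 1), (Wv 1, Wv 2), (Wv 2, Wv 4), (Wv 4, Ustar)} \<or>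
        (w, v) \<in> edges (F0 t1 t2 t3) \<union> {(Ustar, Wv 3), (Wv 3, Wv 1), (Wv 1, Wv 2), (Wv 2, Wv 4), (Wv 4, Ustar)}}"
    then have h: "w \<in> verts (F0 t1 t2 t3) \<union> {Wv 1, Wv 2, Wv 3, Wv 4}" "(v, w) \<in> edges (F0 t1 t2 t3) \<or> (w, v) \<in> edges (F0 t1 t2 t3)"
      using C[of w] by blast+
    then show "w \<in> {w \<in> verts (F0 t1 t2 t3). (v, w) \<in> edges (F0 t1 t2 t3) \<or> (w, v) \<in> edges (F0 t1 t2 t3)}"
      using W[OF h(2)] by blast
  qed auto
qed
lemma U_in_V0: "Ustar \<in> verts (F0 t1 t2 t3)"
  by (simp add: F0_def verts_def)
lemma nbF1_W: "nb (F1 t1 t2 t3) (Wv 1) = {Wv 3, Wv 2}" "nb (F1 t1 t2 t3) (Wv 2) = {Wv 1, Wv 4}"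
  "nb (F1 t1 t2 t3) (Wv 3) = {Ustar, Wv 1}" "nb (F1 t1 t2 t3) (Wv 4) = {Wv 2, Ustar}"
  by (auto simp: nb_def F1_def F0_def verts_def edges_def split: if_splits)

lemma sumU0:
  assumes l: "l > 1" "l^2 > real t2" "l^2 > 2*real t3"
  shows "(\<Sum>w\<in>Av`{1..t1} \<union> Bv`{1..t1} \<union> (if t2\<ge>1 then Uv`{1..t2} else {}) \<union> (if t3 \<ge> 1 then {V1',V2'} else {}). yv t2 t3 l w) = s0 t1 t2 t3 l"
proof -
  let ?A = "Av`{1..t1}" and ?B = "Bv`{1..t1}" and ?C = "(if t2\<ge>1 then Uv`{1..t2} else {})"
    and ?D = "(if t3 \<ge> 1 then {V1',V2'} else {})"
  have sA: "(\<Sum>w\<in>?A. yv t2 t3 l w) = real t1 * (1/(l-1))"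
    by (rule sum_img_const[OF inj_Av]) (simp add: yv_def)
  have sB: "(\<Sum>w\<in>?B. yv t2 t3 l w) = real t1 * (1/(l-1))"
    by (rule sum_img_const[OF inj_Bv]) (simp add: yv_def)
  have sC: "(\<Sum>w\<in>?C. yv t2 t3 l w) = real t2 * l/(l^2-real t2)"
  proof (cases "t2 \<ge> 1")
    case True
    have "(\<Sum>w\<in>Uv`{1..t2}. yv t2 t3 l w) = real t2 * (l/(l^2-real t2))"
      by (rule sum_img_const[OF inj_Uv]) (simp add: yv_def)
    then show ?thesis using True by simp
  qed simp
  have sD: "(\<Sum>w\<in>?D. yv t2 t3 l w) = (if t3\<ge>1 then 1 else 0) * (2*l/(l^2-2*real t3))"
    by (simp add: yv_def)
  have "(\<Sum>w\<in>?A \<union> ?B \<union> ?C \<union> ?D. yv t2 t3 l w) = (\<Sum>w\<in>?A \<union> ?B \<union> ?C. yv t2 t3 l w) + (\<Sum>w\<in>?D. yv t2 t3 l w)"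
    by (rule sum.union_disjoint) auto
  also have "(\<Sum>w\<in>?A \<union> ?B \<union> ?C. yv t2 t3 l w) = (\<Sum>w\<in>?A \<union> ?B. yv t2 t3 l w) + (\<Sum>w\<in>?C. yv t2 t3 l w)"
    by (rule sum.union_disjoint) auto
  also have "(\<Sum>w\<in>?A \<union> ?B. yv t2 t3 l w) = (\<Sum>w\<in>?A. yv t2 t3 l w) + (\<Sum>w\<in>?B. yv t2 t3 l w)"
    by (rule sum.union_disjoint) auto
  finally show ?thesis unfolding sA sB sC sD s0_def by simp
qed

lemma frac1: assumes "(D::real) \<noteq> 0" "l^2 = D + t" shows "l*(l/D) = 1 + t/D"
proof -
  have "l*(l/D) = l^2/D" by (simp add: power2_eq_square)
  also have "\<dots> = (D+t)/D" using assms(2) by simp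
  also have "\<dots> = 1 + t/D" using assms(1) by (simp add: add_divide_distrib)
  finally show ?thesis .
qed

lemma frac2: assumes "(l::real) - 1 \<noteq> 0" shows "l * (1/(l-1)) = 1 + 1/(l-1)"
  using assms by (simp add: field_simps)

lemma nb_vals:
  assumes l: "l > 1" "l^2 > real t2" "l^2 > 2*real t3"
    and v: "v \<in> verts (F0 t1 t2 t3)" "v \<noteq> Ustar"
  shows "(\<Sum>w\<in>nb (F0 t1 t2 t3) v. yv t2 t3 l w) = l * yv t2 t3 l v"
proof -
  have d1: "l - 1 \<noteq> 0" "l^2 - real t2 \<noteq> 0" "l^2 - 2*real t3 \<noteq> 0" using l by auto
  consider (A) i where "v = Av i" "i \<in> {1..t1}" | (B) i where "v = Bv i" "i \<in> {1..t1}"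
    | (V) "v = Vv" "t2 \<ge> 1" | (U) j where "v = Uv j" "j \<in> {1..t2}" "t2 \<ge> 1"
    | (V1) "v = V1'" "t3 \<ge> 1" | (V2) "v = V2'" "t3 \<ge> 1" | (K) k where "v = Vk k" "k \<in> {1..t3}" "t3 \<ge> 1"
    using v by (auto simp: F0_def verts_def split: if_splits)
  then show ?thesis
  proof cases
    case (A i)
    have "nb (F0 t1 t2 t3) v = {Ustar, Bv i}" using A
      by (auto simp: nb_def F0_def verts_def edges_def split: if_splits)
    then show ?thesis using A frac2[OF d1(1)] by (simp add: yv_def)
  next
    case (B i)
    have "nb (F0 t1 t2 t3) v = {Ustar, Av i}" using B
      by (auto simp: nb_def F0_def verts_def edges_def split: if_splits)
    then show ?thesis using B frac2[OF d1(1)] by (simp add: yv_def)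
  next
    case V
    have "nb (F0 t1 t2 t3) v = Uv`{1..t2}" using V
      by (auto simp: nb_def F0_def verts_def edges_def split: if_splits)
    moreover have "(\<Sum>w\<in>Uv`{1..t2}. yv t2 t3 l w) = real t2 * (l/(l^2-real t2))"
      by (rule sum_img_const[OF inj_Uv]) (simp add: yv_def)
    ultimately show ?thesis using V by (simp add: yv_def)
  next
    case (U j)
    have "nb (F0 t1 t2 t3) v = {Ustar, Vv}" using U
      by (auto simp: nb_def F0_def verts_def edges_def split: if_splits)
    then show ?thesis using U frac1[of "l^2 - real t2" l "real t2", OF d1(2)] by (simp add: yv_def)
  next
    case V1
    have "nb (F0 t1 t2 t3) v = insert Ustar (Vk`{1..t3})" using V1
      by (auto simp: nb_def F0_def verts_def edges_def split: if_splits)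
    moreover have "(\<Sum>w\<in>Vk`{1..t3}. yv t2 t3 l w) = real t3 * (2/(l^2-2*real t3))"
      by (rule sum_img_const[OF inj_Vk]) (simp add: yv_def)
    moreover have "Ustar \<notin> Vk`{1..t3}" by auto
    ultimately show ?thesis using V1 frac1[of "l^2 - 2*real t3" l "2*real t3", OF d1(3)] by (simp add: yv_def)
  next
    case V2
    have "nb (F0 t1 t2 t3) v = insert Ustar (Vk`{1..t3})" using V2
      by (auto simp: nb_def F0_def verts_def edges_def split: if_splits)
    moreover have "(\<Sum>w\<in>Vk`{1..t3}. yv t2 t3 l w) = real t3 * (2/(l^2-2*real t3))"
      by (rule sum_img_const[OF inj_Vk]) (simp add: yv_def)
    moreover have "Ustar \<notin> Vk`{1..t3}" by auto
    ultimately show ?thesis using V2 frac1[of "l^2 - 2*real t3" l "2*real t3", OF d1(3)] by (simp add: yv_def)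
  next
    case (K k)
    have "nb (F0 t1 t2 t3) v = {V1', V2'}" using K
      by (auto simp: nb_def F0_def verts_def edges_def split: if_splits)
    then show ?thesis using K by (simp add: yv_def)
  qed
qed


lemma F0_sums:
  assumes l: "l > 1" "l^2 > real t2" "l^2 > 2*real t3" and v: "v \<in> verts (F0 t1 t2 t3)"
  shows "(\<Sum>w\<in>verts (F0 t1 t2 t3). adj (F0 t1 t2 t3) v w * yv t2 t3 l w)
     = (if v = Ustar then s0 t1 t2 t3 l else l * yv t2 t3 l v)"
  using sumU0[OF l, of t1] nb_vals[OF l v] by (simp add: sum_adj[OF finF0] nbF0_U)

lemma frac3: assumes "(E::real) \<noteq> 0" "l*(l-1) = E + 1" shows "l * ((l-1)/E) = 1 + 1/E"
proof -
  have "l * ((l-1)/E) = (l*(l-1))/E" by simp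
  also have "\<dots> = (E+1)/E" using assms(2) by simp
  also have "\<dots> = 1 + 1/E" using assms(1) by (simp add: add_divide_distrib)
  finally show ?thesis .
qed

lemma F1_sums:
  assumes l: "l > 1" "l^2 > real t2" "l^2 > 2*real t3" "l^2 - l - 1 \<noteq> 0" and v: "v \<in> verts (F1 t1 t2 t3)"
  shows "(\<Sum>w\<in>verts (F1 t1 t2 t3). adj (F1 t1 t2 t3) v w * yv t2 t3 l w)
     = (if v = Ustar then s0 t1 t2 t3 l + 2*(l-1)/(l^2-l-1) else l * yv t2 t3 l v)"
proof -
  have E: "l*(l-1) = (l^2-l-1) + 1" by (simp add: power2_eq_square algebra_simps)
  have "(\<Sum>w\<in>nb (F1 t1 t2 t3) v. yv t2 t3 l w) = (if v = Ustar then s0 t1 t2 t3 l + 2*(l-1)/(l^2-l-1) else l * yv t2 t3 l v)"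
  proof (cases "v = Ustar")
    case True
    let ?X = "Av`{1..t1} \<union> Bv`{1..t1} \<union> (if t2\<ge>1 then Uv`{1..t2} else {}) \<union> (if t3 \<ge> 1 then {V1',V2'} else {})"
    have "(\<Sum>w\<in>?X \<union> {Wv 3, Wv 4}. yv t2 t3 l w) = (\<Sum>w\<in>?X. yv t2 t3 l w) + (\<Sum>w\<in>{Wv 3, Wv 4}. yv t2 t3 l w)"
      by (rule sum.union_disjoint) auto
    also have "\<dots> = s0 t1 t2 t3 l + 2*(l-1)/(l^2-l-1)"
      using sumU0[OF l(1-3), of t1] by (simp add: yv_def)
    finally show ?thesis using True by (simp add: nbF1_U)
  next
    case False
    show ?thesis
    proof (cases "\<exists>n. v = Wv n")
      case True
      then obtain n where n: "v = Wv n" by auto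
      have "n \<in> {1,2,3,4}" using v n by (auto simp: verts_F1 V0_noW)
      then consider "v = Wv 1" | "v = Wv 2" | "v = Wv 3" | "v = Wv 4" using n by auto
      then show ?thesis
      proof cases
        case 1
        have nbv: "nb (F1 t1 t2 t3) v = {Wv 3, Wv 2}" unfolding 1 by (rule nbF1_W(1))
        show ?thesis using 1 nbv by (simp add: yv_def add_divide_distrib[symmetric])
      next
        case 2
        have nbv: "nb (F1 t1 t2 t3) v = {Wv 1, Wv 4}" unfolding 2 by (rule nbF1_W(2))
        show ?thesis using 2 nbv by (simp add: yv_def add_divide_distrib[symmetric])
      next
        case 3
        have nbv: "nb (F1 t1 t2 t3) v = {Ustar, Wv 1}" unfolding 3 by (rule nbF1_W(3))
        show ?thesis using 3 nbv using frac3[OF l(4) E] by (simp add: yv_def)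
      next
        case 4
        have nbv: "nb (F1 t1 t2 t3) v = {Wv 2, Ustar}" unfolding 4 by (rule nbF1_W(4))
        show ?thesis using 4 nbv using frac3[OF l(4) E] by (simp add: yv_def)
      qed
    next
      case nW: False
      have vv: "v \<in> verts (F0 t1 t2 t3)" using v nW by (auto simp: verts_F1)
      show ?thesis using nb_vals[OF l(1-3) vv False] nbF1_F0[OF False, of t1 t2 t3] nW False by auto
    qed
  qed
  then show ?thesis by (simp add: sum_adj[OF finF1])
qed



lemma F1_has_eig: "adj_eigenvalue (F1 t1 t2 t3) ((sqrt 5 - 1)/2)"
proof -
  define p :: real where "p = (sqrt 5 - 1)/2"
  have pp: "p * p + p = 1"
  proof -
    have "sqrt 5 * sqrt 5 = (5::real)" by simp
    then show ?thesis unfolding p_def by (simp add: field_simps)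
  qed
  define x where "x v = (case v of Wv n \<Rightarrow> (if n = 1 then 1 else if n = 2 then -1
      else if n = 3 then p + 1 else if n = 4 then -(p+1) else 0) | _ \<Rightarrow> (0::real))" for v
  have x0: "x v = 0" if "\<And>n. v \<noteq> Wv n" for v using that by (cases v) (auto simp: x_def)
  have "(\<Sum>w\<in>nb (F1 t1 t2 t3) v. x w) = p * x v" if v: "v \<in> verts (F1 t1 t2 t3)" for v
  proof (cases "v = Ustar")
    case True
    let ?X = "Av`{1..t1} \<union> Bv`{1..t1} \<union> (if t2\<ge>1 then Uv`{1..t2} else {}) \<union> (if t3 \<ge> 1 then {V1',V2'} else {})"
    have X0: "(\<Sum>w\<in>?X. x w) = 0" by (rule sum.neutral) (auto simp: x_def)
    have "(\<Sum>w\<in>?X \<union> {Wv 3, Wv 4}. x w) = (\<Sum>w\<in>?X. x w) + (\<Sum>w\<in>{Wv 3, Wv 4}. x w)"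
      by (rule sum.union_disjoint) auto
    also have "\<dots> = 0" using X0 by (simp add: x_def)
    finally show ?thesis using True by (simp add: nbF1_U x_def)
  next
    case False
    show ?thesis
    proof (cases "\<exists>n. v = Wv n")
      case True
      then obtain n where n: "v = Wv n" by auto
      have "n \<in> {1,2,3,4}" using v n by (auto simp: verts_F1 V0_noW)
      then consider "v = Wv 1" | "v = Wv 2" | "v = Wv 3" | "v = Wv 4" using n by auto
      then show ?thesis
      proof cases
        case 1
        have nbv: "nb (F1 t1 t2 t3) v = {Wv 3, Wv 2}" unfolding 1 by (rule nbF1_W(1))
        show ?thesis using 1 nbv by (simp add: x_def)
      next
        case 2
        have nbv: "nb (F1 t1 t2 t3) v = {Wv 1, Wv 4}" unfolding 2 by (rule nbF1_W(2))
        show ?thesis using 2 nbv by (simp add: x_def)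
      next
        case 3
        have nbv: "nb (F1 t1 t2 t3) v = {Ustar, Wv 1}" unfolding 3 by (rule nbF1_W(3))
        show ?thesis using 3 nbv pp by (simp add: x_def algebra_simps)
      next
        case 4
        have nbv: "nb (F1 t1 t2 t3) v = {Wv 2, Ustar}" unfolding 4 by (rule nbF1_W(4))
        show ?thesis using 4 nbv pp by (simp add: x_def algebra_simps)
      qed
    next
      case nW: False
      have "(\<Sum>w\<in>nb (F0 t1 t2 t3) v. x w) = 0"
      proof (rule sum.neutral, rule ballI)
        fix w assume "w \<in> nb (F0 t1 t2 t3) v"
        then have "w \<in> verts (F0 t1 t2 t3)" by (simp add: nb_def)
        then show "x w = 0" using V0_noW by (intro x0) metis
      qed
      then show ?thesis using nbF1_F0[OF False, of t1 t2 t3] nW x0 by auto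
    qed
  qed
  moreover have "Wv 1 \<in> verts (F1 t1 t2 t3)" "x (Wv 1) \<noteq> 0" by (auto simp: verts_F1 x_def)
  ultimately show ?thesis unfolding adj_eigenvalue_def p_def[symmetric]
    by (intro exI[of _ x]) (auto simp: sum_adj[OF finF1])
qed



lemma s0_Suc: "s0 (Suc t1) (Suc t2) t3 l = 2*(real t1+1)/(l-1) + (real t2+1)*l/(l^2-(real t2+1))
   + (if t3\<ge>1 then 1 else 0) * (2*l/(l^2-2*real t3))"
  by (simp add: s0_def algebra_simps)

lemma s0_diff:
  assumes c: "c > 2" "c^2 > real t2 + 1" "c^2 > 2*real t3"
  shows "s0 (Suc t1) (Suc t2) t3 c - s0 t1 t2 t3 c - 2*(c-1)/(c^2-c-1) > 0"
proof -
  have c1: "c - 1 > 0" using c by simp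
  have "c*(c-1) > 2*1" using c by (intro mult_strict_mono) auto
  hence E: "c^2 - c - 1 > 0" by (simp add: power2_eq_square algebra_simps)
  have dA: "2/(c-1) - 2*(c-1)/(c^2-c-1) > 0"
  proof -
    have sq: "2*(c-1)*(c-1) = 2*c^2 - 4*c + 2" by (simp add: power2_eq_square algebra_simps)
    have "2*c^2 - 4*c + 2 < 2*(c^2-c-1)" using c by (simp add: algebra_simps)
    hence "2*(c-1)*(c-1) < 2*(c^2-c-1)" by (subst sq)
    hence "2*(c-1)*(c-1)/(c^2-c-1) < 2" using E by (simp add: pos_divide_less_eq)
    hence "2*(c-1)/(c^2-c-1) * (c-1) < 2" by simp
    hence "2*(c-1)/(c^2-c-1) < 2/(c-1)" using c1 by (simp add: pos_less_divide_eq)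
    then show ?thesis by simp
  qed
  have dB: "(real t2+1)*c/(c^2-(real t2+1)) - real t2 * c/(c^2-real t2) \<ge> 0"
  proof -
    have p1: "c^2-(real t2+1) > 0" "c^2 - real t2 > 0" using c by auto
    have "real t2 * c/(c^2-real t2) \<le> (real t2+1)*c/(c^2-(real t2+1))"
      using p1 c by (intro frac_le) auto
    then show ?thesis by simp
  qed
  have a1: "2*(real t1+1)/(c-1) - 2*real t1/(c-1) = 2/(c-1)"
    by (simp add: diff_divide_distrib[symmetric] algebra_simps)
  have "s0 (Suc t1) (Suc t2) t3 c - s0 t1 t2 t3 c = 2/(c-1) + ((real t2+1)*c/(c^2-(real t2+1)) - real t2 * c/(c^2-real t2))"
    unfolding s0_Suc using a1 by (simp add: s0_def)
  then show ?thesis using dA dB by simp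
qed



lemma Vv_F1: "Vv \<in> verts (F1 t1 t2 t3) \<Longrightarrow> t2 \<ge> 1"
  unfolding verts_F1 by (auto simp: F0_def verts_def split: if_splits)

lemma yv_pos:
  assumes "l > 2" "l^2 > real t2" "l^2 > 2*real t3" "v \<in> verts (F1 t1 t2 t3)"
  shows "yv t2 t3 l v > 0"
proof -
  have "l*(l-1) > 2*1" using assms by (intro mult_strict_mono) auto
  hence E: "l^2 - l - 1 > 0" by (simp add: power2_eq_square algebra_simps)
  have p: "l - 1 > 0" "l^2 - real t2 > 0" "l^2 - 2*real t3 > 0" using assms by auto
  show ?thesis
  proof (cases v)
    case Vv
    then have "t2 \<ge> 1" using Vv_F1 assms(4) by simp
    then show ?thesis using Vv p by (simp add: yv_def)
  qed (use p E assms(1) in \<open>auto simp: yv_def\<close>)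
qed

lemma h0_a:
  fixes a :: real
  assumes a2: "a^2 = max (real t2 + 2) (2*real t3 + 1)" and a1: "a > 1"
  shows "s0 (Suc t1) (Suc t2) t3 a > a"
proof -
  have T1: "2*(real t1+1)/(a-1) > 0" using a1 by simp
  have p2: "a^2 - (real t2 + 1) > 0" "a^2 - 2*real t3 > 0" using a2 by auto
  have T2: "(real t2+1)*a/(a^2-(real t2+1)) > 0" using p2 a1 by simp
  have T3: "(if t3\<ge>1 then 1 else 0) * (2*a/(a^2-2*real t3)) \<ge> 0" using p2 a1 by simp
  show ?thesis
  proof (cases "real t2 + 2 \<ge> 2*real t3 + 1")
    case True
    have d: "a^2 - (real t2 + 1) = 1" using a2 True by simp
    have "(real t2+1)*a/(a^2-(real t2+1)) = (real t2+1)*a" unfolding d by simp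
    moreover have "(real t2+1)*a \<ge> 1*a" using a1 by (intro mult_right_mono) auto
    ultimately have "(real t2+1)*a/(a^2-(real t2+1)) \<ge> a" by simp
    then show ?thesis unfolding s0_Suc using T1 T3 by linarith
  next
    case False
    then have t3: "t3 \<ge> 1" by simp
    have d: "a^2 - 2*real t3 = 1" using a2 False by simp
    have "(if t3\<ge>1 then 1 else 0) * (2*a/(a^2-2*real t3)) = 2*a" using t3 unfolding d by simp
    then have "(if t3\<ge>1 then 1 else 0) * (2*a/(a^2-2*real t3)) \<ge> a" using a1 by simp
    then show ?thesis unfolding s0_Suc using T1 T2 by linarith
  qed
qed

lemma h0_b:
  fixes b :: real
  assumes b: "b = 2*real t1 + 2*real t2 + 2*real t3 + 10"
  shows "s0 (Suc t1) (Suc t2) t3 b < b"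
proof -
  have nn: "real t1 \<ge> 0" "real t2 \<ge> 0" "real t3 \<ge> 0" by simp_all
  have b1: "b - 1 > 0" using b by simp
  have T1: "2*(real t1+1)/(b-1) \<le> 1" using b1 b by (simp add: pos_divide_le_eq)
  have sq: "b^2 = b*b" by (simp add: power2_eq_square)
  have e1: "b * (real t2 + 2) = b * (real t2 + 1) + b" by (simp add: algebra_simps)
  have bb: "b * b \<ge> b * (real t2 + 2)" using b by (intro mult_left_mono) auto
  have "b*(real t2+1) \<ge> 0" using b by simp
  have bg2: "b \<ge> real t2 + 2" using b nn by linarith
  hence q2: "b^2 - (real t2+1) > 0" using bb e1 sq \<open>b*(real t2+1) \<ge> 0\<close> by linarith
  have bge: "b \<ge> real t2 + 1" using b nn by linarith
  have "(real t2+1)*b + (real t2+1) = b*(real t2+1) + (real t2+1)" by (simp add: mult.commute)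
  also have "\<dots> \<le> b*(real t2+1) + b" using bge by simp
  also have "\<dots> = b*(real t2+2)" using e1 by simp
  also have "\<dots> \<le> b*b" by (rule bb)
  finally have "(real t2+1)*b + (real t2 + 1) \<le> b*b" .
  hence "(real t2+1)*b \<le> 1 * (b^2-(real t2+1))" unfolding sq by (simp add: algebra_simps)
  hence T2: "(real t2+1)*b/(b^2-(real t2+1)) \<le> 1" using q2 by (simp only: pos_divide_le_eq)
  have bb3: "b * b \<ge> b * 4" using b by (intro mult_left_mono) auto
  have bg3: "b \<ge> real t3 + 1" using b nn by linarith
  have q3: "b^2 - 2*real t3 > 0" using bb3 sq bg3 by linarith
  have "2*b \<le> b^2 - 2*real t3" using bb3 sq bg3 by linarith
  hence "2*b \<le> 1 * (b^2 - 2*real t3)" by simp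
  hence T3': "2*b/(b^2-2*real t3) \<le> 1" using q3 by (simp only: pos_divide_le_eq)
  have T3: "(if t3\<ge>1 then 1 else 0) * (2*b/(b^2-2*real t3)) \<le> 1" using T3' by simp
  show ?thesis unfolding s0_Suc using T1 T2 T3 b by linarith
qed



theorem proposition4p2:
  fixes t1 t2 t3 :: nat
  assumes "t2 = 0 \<or> t2 \<ge> 2"
  shows "rho (F1 t1 t2 t3) < rho (F0 (t1 + 1) (t2 + 1) t3)"
proof -
  define m :: real where "m = max (real t2 + 2) (2*real t3 + 1)"
  define a where "a = sqrt m"
  define b :: real where "b = 2*real t1 + 2*real t2 + 2*real t3 + 10"
  define h0 where "h0 l = l - s0 (Suc t1) (Suc t2) t3 l" for l
  have nn: "real t1 \<ge> 0" "real t2 \<ge> 0" "real t3 \<ge> 0" by simp_all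
  have m2: "m \<ge> 2" by (simp add: m_def)
  have a2: "a^2 = m" using m2 by (simp add: a_def)
  have a1: "a > 1" unfolding a_def using m2 by simp
  have am: "a^2 > real t2 + 1" "a^2 > 2*real t3" using a2 by (auto simp: m_def)
  have ab: "a \<le> b"
  proof -
    have b1: "b \<ge> 1" using nn by (simp add: b_def)
    have "m \<le> b" using nn by (simp add: m_def b_def)
    also have "b \<le> b * b" using b1 by simp
    finally have "m \<le> b^2" by (simp add: power2_eq_square)
    hence "sqrt m \<le> sqrt (b^2)" by (rule real_sqrt_le_mono)
    thus ?thesis using b1 by (simp add: a_def)
  qed
  have ha: "h0 a < 0" using h0_a[of a t2 t3 t1] a2 a1 by (simp add: h0_def m_def)
  have hb: "h0 b > 0" using h0_b[OF b_def] by (simp add: h0_def)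
  have lab: "l > 1 \<and> l^2 > real t2 + 1 \<and> l^2 > 2*real t3" if "l \<in> {a..b}" for l
  proof -
    have q: "a^2 \<le> l^2" using that a1 by (intro power_mono) auto
    have "l > 1" using that a1 by auto
    thus ?thesis using q am by linarith
  qed
  have cont: "continuous_on {a..b} h0"
    unfolding h0_def s0_Suc
    by (intro continuous_intros) (auto dest!: lab)
  obtain c where c: "a \<le> c" "c \<le> b" "h0 c = 0"
    using IVT'[of h0 a 0 b] ha hb ab cont by auto
  have ca: "c > a" using c ha by (cases "c = a") auto
  have csq: "c^2 > a^2" using ca a1 by (intro power_strict_mono) auto
  have c1: "c > 1" using ca a1 by simp
  have cc: "c^2 > real (Suc t2)" "c^2 > 2*real t3" using csq am by auto
  have s0c: "s0 (Suc t1) (Suc t2) t3 c = c" using c(3) by (simp add: h0_def)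
  have eig0: "adj_eigenvalue (F0 (Suc t1) (Suc t2) t3) c"
    unfolding adj_eigenvalue_def
  proof (intro exI[of _ "yv (Suc t2) t3 c"] conjI)
    show "\<exists>v\<in>verts (F0 (Suc t1) (Suc t2) t3). yv (Suc t2) t3 c v \<noteq> 0"
      using U_in_V0 by (intro bexI[of _ Ustar]) (auto simp: yv_def)
    show "\<forall>v\<in>verts (F0 (Suc t1) (Suc t2) t3). (\<Sum>w\<in>verts (F0 (Suc t1) (Suc t2) t3). adj (F0 (Suc t1) (Suc t2) t3) v w * yv (Suc t2) t3 c w) =
         c * yv (Suc t2) t3 c v"
      using F0_sums[OF c1 cc] s0c by (auto simp: yv_def)
  qed
  have c2: "c > 2"
  proof (rule ccontr)
    assume "\<not> c > 2"
    hence cle: "c \<le> 2" by simp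
    have "2/(c-1) \<ge> 2/1" using c1 cle by (intro divide_left_mono) auto
    moreover have "2*(real t1+1)/(c-1) \<ge> 2/(c-1)" using c1 nn by (intro divide_right_mono) auto
    moreover have "(real t2+1)*c/(c^2-(real t2+1)) > 0" using c1 cc by simp
    moreover have "(if t3\<ge>1 then 1 else 0) * (2*c/(c^2-2*real t3)) \<ge> 0" using c1 cc by simp
    ultimately have "s0 (Suc t1) (Suc t2) t3 c > c" unfolding s0_Suc using cle by linarith
    thus False using s0c by simp
  qed
  define h1 where "h1 l = l - (s0 t1 t2 t3 l + 2*(l-1)/(l^2-l-1))" for l
  have h1c: "h1 c > 0" using s0_diff[of c t2 t3 t1] c2 cc s0c by (simp add: h1_def)
  have "c*(c-1) > 2*1" using c2 by (intro mult_strict_mono) auto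
  hence Ec: "c^2 - c - 1 > 0" by (simp add: power2_eq_square algebra_simps)
  have cont1: "isCont h1 c"
    unfolding h1_def s0_def using c1 cc Ec
    by (intro continuous_intros) auto
  then have "h1 \<midarrow>c\<rightarrow> h1 c" by (simp add: isCont_def)
  then obtain s where s: "s > 0" "\<And>x. x \<noteq> c \<Longrightarrow> norm (x - c) < s \<Longrightarrow> norm (h1 x - h1 c) < h1 c"
    using h1c unfolding LIM_eq by blast
  define M where "M = max 2 a"
  define l' where "l' = max (c - s/2) ((c + M)/2)"
  have Mc: "M < c" using c2 ca by (simp add: M_def)
  have l'c: "l' < c" using s Mc by (simp add: l'_def)
  have l's: "norm (l' - c) < s" using s l'c by (simp add: l'_def)
  have M: "M \<ge> 2" "M \<ge> a" by (auto simp: M_def)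
  have mid1: "(c + M)/2 > 2" using c2 ca M by (simp add: field_simps)
  have mid2: "(c + M)/2 > a" using c2 ca M by (simp add: field_simps)
  have "l' \<ge> (c + M)/2" unfolding l'_def by (rule max.cobounded2)
  hence l'2: "l' > 2" "l' > a" using mid1 mid2 by auto
  have h1l': "h1 l' > 0" using s(2)[of l'] l'c l's by auto
  have l'sq: "l'^2 > a^2" using l'2 a1 by (intro power_strict_mono) auto
  have ll: "l' > 1" "l'^2 > real t2" "l'^2 > 2*real t3" using l'2 l'sq am by auto
  have "l'*(l'-1) > 2*1" using l'2 by (intro mult_strict_mono) auto
  hence El: "l'^2 - l' - 1 > 0" by (simp add: power2_eq_square algebra_simps)
  have sup1: "\<forall>v\<in>verts (F1 t1 t2 t3). (\<Sum>w\<in>verts (F1 t1 t2 t3). adj (F1 t1 t2 t3) v w * yv t2 t3 l' w) \<le> l' * yv t2 t3 l' v"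
  proof
    fix v assume v: "v \<in> verts (F1 t1 t2 t3)"
    show "(\<Sum>w\<in>verts (F1 t1 t2 t3). adj (F1 t1 t2 t3) v w * yv t2 t3 l' w) \<le> l' * yv t2 t3 l' v"
      using F1_sums[OF ll _ v] El h1l' by (auto simp: h1_def yv_def)
  qed
  have pos1: "\<forall>v\<in>verts (F1 t1 t2 t3). yv t2 t3 l' v > 0"
    using yv_pos[OF l'2(1) ll(2,3)] by blast
  define S1 where "S1 = {mu. adj_eigenvalue (F1 t1 t2 t3) mu}"
  define S0 where "S0 = {mu. adj_eigenvalue (F0 (Suc t1) (Suc t2) t3) mu}"
  have fS1: "finite S1" unfolding S1_def by (rule fin_eig[OF finF1])
  have fS0: "finite S0" unfolding S0_def by (rule fin_eig[OF finF0])
  have neS1: "S1 \<noteq> {}" using F1_has_eig unfolding S1_def by blast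
  have "rho (F1 t1 t2 t3) \<in> S1" unfolding rho_def S1_def[symmetric] using fS1 neS1 by (rule Max_in)
  hence r1: "rho (F1 t1 t2 t3) \<le> l'"
    unfolding S1_def using eig_le[OF finF1 pos1 sup1] by blast
  have r0: "c \<le> rho (F0 (Suc t1) (Suc t2) t3)"
    unfolding rho_def S0_def[symmetric] using fS0 eig0 by (intro Max_ge) (auto simp: S0_def)
  show ?thesis using r1 r0 l'c by simp
qed

end
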